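(* Let $X$ be a finite set with $|X|\geq 2$. Then the $C^*$-algebra $\mathbb{A}_X$ is non-commutative and infinite dimensional.
   Context: For $n\geq 0$, $X^n$ is the set of words of length $n$ in $X$, with $X^0=\{\varnothing\}$. $\mathbb{A}_X$ is the universal $C^*$-algebra generated by elements $\{a_{u,v}: u,v\in X^n,\ n\geq 0\}$ subject to: (i) $a_{\varnothing,\varnothing}=1$; (ii) $a_{u,v}^*=a_{u,v}^2=a_{u,v}$; (iii) for all $n\geq0$, $u,v\in X^n$, $x\in X$: $a_{u,v}=\sum_{y\in X}a_{ux,vy}=\sum_{z\in X}a_{uz,vx}$. *)

theory Defs
  imports Complex_Main
begin

definition l2 :: "(nat \<Rightarrow> complex) set" where
  "l2 = {f. summable (\<lambda>n. (cmod (f n))^2)}"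

definition l2_norm :: "(nat \<Rightarrow> complex) \<Rightarrow> real" where
  "l2_norm f = sqrt (\<Sum>n. (cmod (f n))^2)"

definition l2_inner :: "(nat \<Rightarrow> complex) \<Rightarrow> (nat \<Rightarrow> complex) \<Rightarrow> complex" where
  "l2_inner f g = (\<Sum>n. f n * cnj (g n))"

type_synonym op = "(nat \<Rightarrow> complex) \<Rightarrow> (nat \<Rightarrow> complex)"

text \<open>Bounded linear operators on l2 (only their values on l2 matter).\<close>
definition bounded_op :: "op \<Rightarrow> bool" where
  "bounded_op T \<longleftrightarrow>
     (\<forall>f\<in>l2. T f \<in> l2) \<and>
     (\<forall>f\<in>l2. \<forall>g\<in>l2. \<forall>a. T (\<lambda>n. a * f n + g n) = (\<lambda>n. a * T f n + T g n)) \<and>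
     (\<exists>C. \<forall>f\<in>l2. l2_norm (T f) \<le> C * l2_norm f)"

definition op_norm :: "op \<Rightarrow> real" where
  "op_norm T = Sup ((\<lambda>f. l2_norm (T f)) ` {f \<in> l2. l2_norm f \<le> 1})"

definition is_projection :: "op \<Rightarrow> bool" where
  "is_projection P \<longleftrightarrow> bounded_op P \<and>
     (\<forall>f\<in>l2. P (P f) = P f) \<and>
     (\<forall>f\<in>l2. \<forall>g\<in>l2. l2_inner (P f) g = l2_inner f (P g))"

type_synonym 'x gen = "'x list \<times> 'x list"

text \<open>Generator a_{u,v} with u, v words of the same length n over X.\<close>
definition is_gen :: "'x set \<Rightarrow> 'x gen \<Rightarrow> bool" where
  "is_gen X g \<longleftrightarrow> set (fst g) \<subseteq> X \<and> set (snd g) \<subseteq> X \<and> length (fst g) = length (snd g)"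

definition is_rep :: "'x set \<Rightarrow> ('x gen \<Rightarrow> op) \<Rightarrow> bool" where
  "is_rep X P \<longleftrightarrow>
     (\<forall>g. is_gen X g \<longrightarrow> is_projection (P g)) \<and>
     (\<forall>f\<in>l2. P ([], []) f = f) \<and>
     (\<forall>u v x. is_gen X (u, v) \<and> x \<in> X \<longrightarrow>
        (\<forall>f\<in>l2. P (u, v) f = (\<lambda>k. \<Sum>y\<in>X. P (u @ [x], v @ [y]) f k) \<and>
                 P (u, v) f = (\<lambda>k. \<Sum>z\<in>X. P (u @ [z], v @ [x]) f k)))"

text \<open>Non-commutative polynomials: finitely supported coefficient functions on monomials
  (lists of generators; the empty list is the unit).\<close>
type_synonym 'x ncpoly = "'x gen list \<Rightarrow> complex"

definition is_poly :: "'x set \<Rightarrow> 'x ncpoly \<Rightarrow> bool" where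
  "is_poly X p \<longleftrightarrow> finite {m. p m \<noteq> 0} \<and> (\<forall>m. p m \<noteq> 0 \<longrightarrow> (\<forall>g\<in>set m. is_gen X g))"

fun mono_eval :: "('x gen \<Rightarrow> op) \<Rightarrow> 'x gen list \<Rightarrow> op" where
  "mono_eval P [] f = f"
| "mono_eval P (g # m) f = P g (mono_eval P m f)"

definition poly_eval :: "('x gen \<Rightarrow> op) \<Rightarrow> 'x ncpoly \<Rightarrow> op" where
  "poly_eval P p f = (\<lambda>k. \<Sum>m\<in>{m. p m \<noteq> 0}. p m * mono_eval P m f k)"

definition poly_mult :: "'x ncpoly \<Rightarrow> 'x ncpoly \<Rightarrow> 'x ncpoly" where
  "poly_mult p q = (\<lambda>m. \<Sum>(m1, m2)\<in>{(m1, m2). m1 @ m2 = m}. p m1 * q m2)"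

text \<open>Universal C*-seminorm: supremum of operator norms over all representations on l2(N)
  (every separable representation embeds unitally into one on l2(N), and A_X is separable).\<close>
definition univ_norm :: "'x set \<Rightarrow> 'x ncpoly \<Rightarrow> real" where
  "univ_norm X p = Sup ((\<lambda>P. op_norm (poly_eval P p)) ` {P. is_rep X P})"

text \<open>A_X is the completion of the free algebra modulo the null ideal {p. univ_norm X p = 0};
  its image (the quotient) is a dense *-subalgebra of A_X.\<close>

definition AX_noncommutative :: "'x set \<Rightarrow> bool" where
  "AX_noncommutative X \<longleftrightarrow>
     (\<exists>p q. is_poly X p \<and> is_poly X q \<and>
        univ_norm X (\<lambda>m. poly_mult p q m - poly_mult q p m) \<noteq> 0)"

definition AX_infinite_dimensional :: "'x set \<Rightarrow> bool" where
  "AX_infinite_dimensional X \<longleftrightarrow>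
     (\<forall>n. \<exists>p :: nat \<Rightarrow> 'x ncpoly. (\<forall>i<n. is_poly X (p i)) \<and>
        (\<forall>c :: nat \<Rightarrow> complex. univ_norm X (\<lambda>m. \<Sum>i<n. c i * p i m) = 0 \<longrightarrow> (\<forall>i<n. c i = 0)))"

end

theory Submission
  imports Defs
begin


lemma l2_zero[simp]: "(\<lambda>n. 0) \<in> l2" by (simp add: l2_def)

lemma l2_summable: "f \<in> l2 \<Longrightarrow> summable (\<lambda>n. (cmod (f n))^2)" by (simp add: l2_def)

lemma l2_norm_nonneg: "f \<in> l2 \<Longrightarrow> 0 \<le> l2_norm f"
  unfolding l2_norm_def by (simp add: l2_def suminf_nonneg)

lemma prod_le_sq: "(a::real) * b \<le> (a^2 + b^2) / 2"
proof -
  have "0 \<le> (a - b)^2" by simp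
  then show ?thesis by (simp add: power2_eq_square algebra_simps)
qed

lemma prod_le_sq2: "(a::real) * b * 2 \<le> a^2 + b^2"
  using prod_le_sq[of a b] by simp

lemma l2_prod_summable:
  assumes "f \<in> l2" "g \<in> l2"
  shows "summable (\<lambda>n. cmod (f n) * cmod (g n))" "summable (\<lambda>n. f n * cnj (g n))"
proof -
  have s: "summable (\<lambda>n. ((cmod (f n))^2 + (cmod (g n))^2) / 2)"
    using assms by (intro summable_divide summable_add) (auto simp: l2_def)
  show 1: "summable (\<lambda>n. cmod (f n) * cmod (g n))"
    by (rule summable_comparison_test[OF _ s]) (auto intro!: exI[of _ 0] prod_le_sq2)
  show "summable (\<lambda>n. f n * cnj (g n))"
    by (rule summable_norm_cancel) (simp add: norm_mult 1)
qed

lemma l2_inner_self: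
  assumes "h \<in> l2" shows "l2_inner h h = complex_of_real (\<Sum>n. (cmod (h n))^2)"
proof -
  have "l2_inner h h = (\<Sum>n. complex_of_real ((cmod (h n))^2))"
    unfolding l2_inner_def by (rule suminf_cong) (rule complex_norm_square[symmetric])
  also have "\<dots> = complex_of_real (\<Sum>n. (cmod (h n))^2)"
    using assms by (intro suminf_of_real[symmetric]) (simp add: l2_def)
  finally show ?thesis .
qed

lemma contract_sq:
  assumes l2: "\<forall>f\<in>l2. P f \<in> l2" and idem: "\<forall>f\<in>l2. P (P f) = P f"
    and sa: "\<forall>f\<in>l2. \<forall>g\<in>l2. l2_inner (P f) g = l2_inner f (P g)"
    and f: "f \<in> l2"
  shows "(\<Sum>n. (cmod (P f n))^2) \<le> (\<Sum>n. (cmod (f n))^2)"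
proof -
  define h where "h = P f"
  have h: "h \<in> l2" using l2 f h_def by auto
  have "l2_inner h h = l2_inner f (P h)" using sa f h h_def by auto
  also have "P h = h" using idem f h_def by auto
  finally have e: "complex_of_real (\<Sum>n. (cmod (h n))^2) = l2_inner f h"
    using l2_inner_self[OF h] by simp
  have "(\<Sum>n. (cmod (h n))^2) = cmod (l2_inner f h)"
    using e[symmetric] by (simp add: suminf_nonneg l2_summable[OF h])
  also have "\<dots> \<le> (\<Sum>n. cmod (f n * cnj (h n)))"
    unfolding l2_inner_def
    by (rule summable_norm) (simp add: norm_mult l2_prod_summable[OF f h])
  also have "\<dots> \<le> (\<Sum>n. ((cmod (f n))^2 + (cmod (h n))^2) / 2)"
    apply (rule suminf_le)
      apply (simp add: norm_mult prod_le_sq2)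
     apply (simp add: norm_mult l2_prod_summable[OF f h])
    using f h by (intro summable_divide summable_add) (auto simp: l2_def)
  also have "\<dots> = ((\<Sum>n. (cmod (f n))^2) + (\<Sum>n. (cmod (h n))^2)) / 2"
    using f h by (simp add: suminf_divide suminf_add l2_summable summable_add)
  finally show ?thesis unfolding h_def by simp
qed

lemma contract:
  assumes l2: "\<forall>f\<in>l2. P f \<in> l2" and idem: "\<forall>f\<in>l2. P (P f) = P f"
    and sa: "\<forall>f\<in>l2. \<forall>g\<in>l2. l2_inner (P f) g = l2_inner f (P g)"
    and f: "f \<in> l2"
  shows "l2_norm (P f) \<le> l2_norm f"
  unfolding l2_norm_def using contract_sq[OF assms] by simp

lemma proj_contract: "is_projection P \<Longrightarrow> f \<in> l2 \<Longrightarrow> l2_norm (P f) \<le> l2_norm f"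
  unfolding is_projection_def bounded_op_def by (intro contract) auto

lemma projI:
  assumes l2: "\<forall>f\<in>l2. P f \<in> l2" and idem: "\<forall>f\<in>l2. P (P f) = P f"
    and sa: "\<forall>f\<in>l2. \<forall>g\<in>l2. l2_inner (P f) g = l2_inner f (P g)"
    and lin: "\<forall>f\<in>l2. \<forall>g\<in>l2. \<forall>a. P (\<lambda>n. a * f n + g n) = (\<lambda>n. a * P f n + P g n)"
  shows "is_projection P"
  unfolding is_projection_def bounded_op_def
  using assms contract[OF l2 idem sa] by (auto intro!: exI[of _ 1])



definition op_of :: "complex \<Rightarrow> complex \<Rightarrow> complex \<Rightarrow> complex \<Rightarrow> bool \<Rightarrow> op" where
  "op_of a b c d e f n = (if n = 0 then a * f 0 + b * f 1 else if n = 1 then c * f 0 + d * f 1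
     else if e then f n else 0)"

lemma op_of_shift: "op_of a b c d e f (n + 2) = (if e then f (n + 2) else 0)"
  by (simp add: op_of_def)

lemma op_of_l2: assumes "f \<in> l2" shows "op_of a b c d e f \<in> l2"
proof -
  have "summable (\<lambda>n. (cmod (f (n + 2)))^2)"
    using assms summable_iff_shift[where f="\<lambda>n. (cmod (f n))^2" and k=2] by (simp add: l2_def)
  then have "summable (\<lambda>n. (cmod (op_of a b c d e f (n + 2)))^2)"
    unfolding op_of_shift by (cases e) auto
  then show ?thesis unfolding l2_def
    using summable_iff_shift[where f="\<lambda>n. (cmod (op_of a b c d e f n))^2" and k=2] by simp
qed

lemma op_of_proj:
  assumes i1: "a * a + b * c = a" and i2: "a * b + b * d = b" and i3: "c * a + d * c = c"
    and i4: "c * b + d * d = d"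
    and h1: "cnj a = a" and h2: "cnj d = d" and h3: "cnj b = c"
  shows "is_projection (op_of a b c d e)"
proof (rule projI)
  show "\<forall>f\<in>l2. op_of a b c d e f \<in> l2" using op_of_l2 by blast
  show "\<forall>f\<in>l2. op_of a b c d e (op_of a b c d e f) = op_of a b c d e f"
  proof (intro ballI ext)
    fix f :: "nat \<Rightarrow> complex" and n :: nat
    have "(a * a + b * c) * f 0 + (a * b + b * d) * f 1 = a * f 0 + b * f 1" using i1 i2 by simp
    moreover have "(c * a + d * c) * f 0 + (c * b + d * d) * f 1 = c * f 0 + d * f 1" using i3 i4 by simp
    ultimately show "op_of a b c d e (op_of a b c d e f) n = op_of a b c d e f n"
      by (auto simp: op_of_def algebra_simps)
  qed
  show "\<forall>f\<in>l2. \<forall>g\<in>l2. \<forall>s. op_of a b c d e (\<lambda>n::nat. s * f n + g n) = (\<lambda>n. s * op_of a b c d e f n + op_of a b c d e g n)"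
    by (auto simp: op_of_def algebra_simps)
  show "\<forall>f\<in>l2. \<forall>g\<in>l2. l2_inner (op_of a b c d e f) g = l2_inner f (op_of a b c d e g)"
  proof (intro ballI)
    fix f g assume f: "f \<in> l2" and g: "g \<in> l2"
    let ?T = "op_of a b c d e"
    have s1: "summable (\<lambda>n. ?T f n * cnj (g n))" using l2_prod_summable(2)[OF op_of_l2[OF f] g] .
    have s2: "summable (\<lambda>n. f n * cnj (?T g n))" using l2_prod_summable(2)[OF f op_of_l2[OF g]] .
    have tail: "(\<lambda>n. ?T f (n+2) * cnj (g (n+2))) = (\<lambda>n. f (n+2) * cnj (?T g (n+2)))"
      by (rule ext) (simp add: op_of_def)
    have hc: "cnj c = b" using h3 by (metis complex_cnj_cnj)
    have head: "(\<Sum>i<2. ?T f i * cnj (g i)) = (\<Sum>i<2. f i * cnj (?T g i))"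
      by (simp add: op_of_def numeral_2_eq_2 h1 h2 h3 hc algebra_simps)
    show "l2_inner (?T f) g = l2_inner f (?T g)"
      unfolding l2_inner_def
      using suminf_split_initial_segment[OF s1, of 2] suminf_split_initial_segment[OF s2, of 2]
        tail head by simp
  qed
qed



lemma finite_cs:
  fixes a :: "'a \<Rightarrow> real"
  assumes "finite A"
  shows "(\<Sum>i\<in>A. a i)^2 \<le> real (card A) * (\<Sum>i\<in>A. (a i)^2)"
proof -
  have "(\<Sum>i\<in>A. a i)^2 = (\<Sum>i\<in>A. \<Sum>j\<in>A. a i * a j)"
    by (simp add: power2_eq_square sum_product)
  also have "\<dots> \<le> (\<Sum>i\<in>A. \<Sum>j\<in>A. ((a i)^2 + (a j)^2) / 2)"
    by (intro sum_mono prod_le_sq)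
  also have "\<dots> = (\<Sum>i\<in>A. (real (card A) * (a i)^2 + (\<Sum>j\<in>A. (a j)^2)) / 2)"
    by (simp add: sum_divide_distrib[symmetric] sum.distrib)
  also have "\<dots> = real (card A) * (\<Sum>i\<in>A. (a i)^2)"
    apply (simp add: sum_divide_distrib[symmetric] sum.distrib sum_distrib_left)
    apply (subst sum_distrib_left[symmetric])
    apply simp
    done
  finally show ?thesis .
qed

lemma finite_cs_c:
  fixes z :: "'a \<Rightarrow> complex"
  assumes "finite A"
  shows "(cmod (\<Sum>i\<in>A. z i))^2 \<le> real (card A) * (\<Sum>i\<in>A. (cmod (z i))^2)"
proof -
  have "(cmod (\<Sum>i\<in>A. z i))^2 \<le> (\<Sum>i\<in>A. cmod (z i))^2"
    by (intro power_mono norm_sum) simp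
  also have "\<dots> \<le> real (card A) * (\<Sum>i\<in>A. (cmod (z i))^2)"
    using finite_cs[OF assms] .
  finally show ?thesis .
qed

lemma mono_bound:
  assumes rep: "is_rep X P" and gens: "\<forall>g\<in>set m. is_gen X g" and f: "f \<in> l2"
  shows "mono_eval P m f \<in> l2 \<and> l2_norm (mono_eval P m f) \<le> l2_norm f"
  using gens
proof (induction m)
  case Nil
  then show ?case using f by simp
next
  case (Cons g m)
  then have ih: "mono_eval P m f \<in> l2" "l2_norm (mono_eval P m f) \<le> l2_norm f" by auto
  have pg: "is_projection (P g)" using rep Cons.prems unfolding is_rep_def by (cases g) auto
  have "P g (mono_eval P m f) \<in> l2" using pg ih(1) unfolding is_projection_def bounded_op_def by auto
  moreover have "l2_norm (P g (mono_eval P m f)) \<le> l2_norm (mono_eval P m f)"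
    using proj_contract[OF pg ih(1)] .
  ultimately show ?case using ih(2) by simp
qed

lemma l2_norm_le1: "f \<in> l2 \<Longrightarrow> l2_norm f \<le> 1 \<Longrightarrow> (\<Sum>n. (cmod (f n))^2) \<le> 1"
  unfolding l2_norm_def by simp

definition pb :: "'x ncpoly \<Rightarrow> real" where
  "pb p = sqrt (real (card {m. p m \<noteq> 0}) * (\<Sum>m\<in>{m. p m \<noteq> 0}. (cmod (p m))^2))"

lemma poly_bound:
  assumes p: "is_poly X p" and rep: "is_rep X P" and f: "f \<in> l2" and f1: "l2_norm f \<le> 1"
  shows "poly_eval P p f \<in> l2 \<and> l2_norm (poly_eval P p f) \<le> pb p"
proof -
  define A where "A = {m. p m \<noteq> 0}"
  have finA: "finite A" using p unfolding is_poly_def A_def by auto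
  define y where "y m = mono_eval P m f" for m
  have yl2: "y m \<in> l2" and y1: "(\<Sum>k. (cmod (y m k))^2) \<le> 1" if "m \<in> A" for m
  proof -
    have "\<forall>g\<in>set m. is_gen X g" using p that unfolding is_poly_def A_def by auto
    from mono_bound[OF rep this f] show "y m \<in> l2" and "(\<Sum>k. (cmod (y m k))^2) \<le> 1"
      using f1 l2_norm_le1 y_def by auto
  qed
  define R where "R k = real (card A) * (\<Sum>m\<in>A. (cmod (p m))^2 * (cmod (y m k))^2)" for k
  have pe: "poly_eval P p f k = (\<Sum>m\<in>A. p m * y m k)" for k
    unfolding poly_eval_def A_def y_def by simp
  have le: "(cmod (poly_eval P p f k))^2 \<le> R k" for k
    unfolding pe R_def using finite_cs_c[OF finA, of "\<lambda>m. p m * y m k"]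
    by (simp add: norm_mult power_mult_distrib)
  have sR: "summable R" unfolding R_def
    using yl2 by (intro summable_mult summable_sum summable_mult) (auto simp: l2_def)
  have sL: "summable (\<lambda>k. (cmod (poly_eval P p f k))^2)"
    by (rule summable_comparison_test[OF _ sR]) (use le in auto)
  have "(\<Sum>k. (cmod (poly_eval P p f k))^2) \<le> suminf R"
    by (rule suminf_le[OF le sL sR])
  also have "suminf R = real (card A) * (\<Sum>m\<in>A. (cmod (p m))^2 * (\<Sum>k. (cmod (y m k))^2))"
    unfolding R_def using yl2
    by (subst suminf_mult) (auto intro!: summable_sum summable_mult simp: suminf_sum suminf_mult l2_def)
  also have "\<dots> \<le> real (card A) * (\<Sum>m\<in>A. (cmod (p m))^2)"
    using y1 by (intro mult_left_mono sum_mono) (auto intro: mult_left_le)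
  finally have "(\<Sum>k. (cmod (poly_eval P p f k))^2) \<le> real (card A) * (\<Sum>m\<in>A. (cmod (p m))^2)" .
  then show ?thesis using sL unfolding pb_def l2_norm_def l2_def A_def by simp
qed

lemma op_norm_le:
  assumes p: "is_poly X p" and rep: "is_rep X P"
  shows "op_norm (poly_eval P p) \<le> pb p"
  unfolding op_norm_def
proof (rule cSup_least)
  show "(\<lambda>f. l2_norm (poly_eval P p f)) ` {f \<in> l2. l2_norm f \<le> 1} \<noteq> {}"
  proof -
    have "(\<lambda>n. 0) \<in> {f \<in> l2. l2_norm f \<le> 1}" by (simp add: l2_norm_def)
    then show ?thesis by blast
  qed
  show "\<And>x. x \<in> (\<lambda>f. l2_norm (poly_eval P p f)) ` {f \<in> l2. l2_norm f \<le> 1} \<Longrightarrow> x \<le> pb p"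
    using poly_bound[OF p rep] by auto
qed

lemma univ_norm_ge:
  assumes p: "is_poly X p" and rep: "is_rep X P" and f: "f \<in> l2" and f1: "l2_norm f \<le> 1"
  shows "l2_norm (poly_eval P p f) \<le> univ_norm X p"
proof -
  have "l2_norm (poly_eval P p f) \<le> op_norm (poly_eval P p)"
    unfolding op_norm_def
    by (rule cSup_upper) (use f f1 poly_bound[OF p] rep in \<open>auto simp: bdd_above_def\<close>)
  also have "\<dots> \<le> univ_norm X p"
    unfolding univ_norm_def
    by (rule cSup_upper) (use rep op_norm_le[OF p] in \<open>auto simp: bdd_above_def\<close>)
  finally show ?thesis .
qed

lemma l2_norm_pos:
  assumes "h \<in> l2" "h k \<noteq> 0" shows "0 < l2_norm h"
proof -
  have "0 < (cmod (h k))^2" using assms by simp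
  also have "\<dots> \<le> (\<Sum>n. (cmod (h n))^2)"
    using assms(1) sum_le_suminf[of "\<lambda>n. (cmod (h n))^2" "{k}"] by (auto simp: l2_def)
  finally show ?thesis unfolding l2_norm_def by simp
qed



lemma id_op: "(\<lambda>f. f) = op_of 1 0 0 1 True"
  by (auto simp: op_of_def fun_eq_iff)
lemma zero_op: "(\<lambda>f n. 0) = op_of 0 0 0 0 False"
  by (auto simp: op_of_def fun_eq_iff)
lemma id_proj: "is_projection (\<lambda>f. f)" unfolding id_op by (rule op_of_proj) auto
lemma zero_proj: "is_projection (\<lambda>f n. 0)" unfolding zero_op by (rule op_of_proj) auto

definition scal :: "('x list \<Rightarrow> 'x list) \<Rightarrow> 'x gen \<Rightarrow> op" where
  "scal g uv f = (if snd uv = g (fst uv) then f else (\<lambda>n. 0))"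

lemma scal_rep:
  assumes g0: "g [] = []" and gs: "\<And>u x. g (u @ [x]) = g u @ [\<sigma> u x]"
    and bij: "\<And>u. bij_betw (\<sigma> u) X X" and fin: "finite X"
  shows "is_rep X (scal g)"
  unfolding is_rep_def
proof (intro conjI allI impI ballI)
  fix uv :: "'a gen"
  show "is_projection (scal g uv)"
  proof -
    have "scal g uv = (if snd uv = g (fst uv) then (\<lambda>f. f) else (\<lambda>f n. 0))"
      by (auto simp: fun_eq_iff scal_def)
    then show ?thesis by (simp add: id_proj zero_proj)
  qed
next
  fix f :: "nat \<Rightarrow> complex" show "scal g ([], []) f = f" by (simp add: scal_def g0)
next
  fix u v :: "'a list" and x f
  assume h: "is_gen X (u, v) \<and> x \<in> X"
  have sx: "\<sigma> u x \<in> X" using bij h by (auto simp: bij_betw_def)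
  show "scal g (u, v) f = (\<lambda>k. \<Sum>y\<in>X. scal g (u @ [x], v @ [y]) f k)"
  proof
    fix k
    have "(\<Sum>y\<in>X. scal g (u @ [x], v @ [y]) f k) = (\<Sum>y\<in>X. if y = \<sigma> u x then (if v = g u then f k else 0) else 0)"
      by (intro sum.cong) (auto simp: scal_def gs)
    also have "\<dots> = (if v = g u then f k else 0)" using sx h fin by simp
    finally show "scal g (u, v) f k = (\<Sum>y\<in>X. scal g (u @ [x], v @ [y]) f k)" by (simp add: scal_def)
  qed
  show "scal g (u, v) f = (\<lambda>k. \<Sum>z\<in>X. scal g (u @ [z], v @ [x]) f k)"
  proof
    fix k
    define F where "F w = (if w = x then (if v = g u then f k else 0) else 0)" for w
    have "(\<Sum>z\<in>X. scal g (u @ [z], v @ [x]) f k) = (\<Sum>z\<in>X. F (\<sigma> u z))"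
      by (intro sum.cong) (auto simp: scal_def gs F_def)
    also have "\<dots> = (\<Sum>w\<in>X. F w)" by (rule sum.reindex_bij_betw[OF bij])
    also have "\<dots> = (if v = g u then f k else 0)" using h fin by (simp add: F_def)
    finally show "scal g (u, v) f k = (\<Sum>z\<in>X. scal g (u @ [z], v @ [x]) f k)" by (simp add: scal_def)
  qed
qed



definition e0 :: "nat \<Rightarrow> complex" where "e0 n = (if n = 0 then 1 else 0)"

lemma e0_sq: "(\<lambda>n. (cmod (e0 n))^2) = (\<lambda>n. if n = 0 then 1 else 0)"
  by (auto simp: e0_def fun_eq_iff)

lemma e0_l2: "e0 \<in> l2" and e0_norm: "l2_norm e0 = 1"
proof -
  have s: "(\<lambda>n. (cmod (e0 n))^2) sums 1" unfolding e0_sq using sums_single[of 0 "\<lambda>_. 1::real"] by simp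
  then show "e0 \<in> l2" unfolding l2_def by (auto simp: sums_iff)
  show "l2_norm e0 = 1" using s unfolding l2_norm_def by (simp add: sums_iff)
qed

lemma poly_eval_superset:
  assumes "finite A" "{m. q m \<noteq> 0} \<subseteq> A"
  shows "poly_eval P q f k = (\<Sum>m\<in>A. q m * mono_eval P m f k)"
  unfolding poly_eval_def
  by (rule sum.mono_neutral_left) (use assms in auto)

definition tau :: "'x \<Rightarrow> 'x \<Rightarrow> 'x \<Rightarrow> 'x" where
  "tau a b x = (if x = a then b else if x = b then a else x)"

definition flip :: "'x \<Rightarrow> 'x \<Rightarrow> nat \<Rightarrow> 'x list \<Rightarrow> 'x list" where
  "flip a b j w = (if j < length w \<and> take j w = replicate j a then w[j := tau a b (w ! j)] else w)"

definition sig :: "'x \<Rightarrow> 'x \<Rightarrow> nat \<Rightarrow> 'x list \<Rightarrow> 'x \<Rightarrow> 'x" where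
  "sig a b j u x = (if u = replicate j a then tau a b x else x)"

lemma flip_nil: "flip a b j [] = []" by (simp add: flip_def)

lemma flip_snoc: "flip a b j (u @ [x]) = flip a b j u @ [sig a b j u x]"
proof (cases "j < length u")
  case True
  then have "u \<noteq> replicate j a" by auto
  then show ?thesis using True
    by (auto simp: flip_def sig_def list_update_append nth_append)
next
  case False
  show ?thesis
  proof (cases "length u = j")
    case True
    then show ?thesis by (auto simp: flip_def sig_def list_update_append nth_append)
  next
    case False
    then have "u \<noteq> replicate j a" by auto
    then show ?thesis using False \<open>\<not> j < length u\<close>
      by (auto simp: flip_def sig_def)
  qed
qed

lemma tau_inv: "tau a b (tau a b x) = x" by (auto simp: tau_def)

lemma sig_bij: assumes "a \<in> X" "b \<in> X" shows "bij_betw (sig a b j u) X X"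
proof (cases "u = replicate j a")
  case True
  have "tau a b ` X \<subseteq> X" using assms by (auto simp: tau_def)
  then have "bij_betw (tau a b) X X"
    by (intro bij_betw_byWitness[where f'="tau a b"]) (auto simp: tau_inv)
  moreover have "sig a b j u = tau a b" using True by (simp add: fun_eq_iff sig_def)
  ultimately show ?thesis by simp
next
  case False
  then have "sig a b j u = (\<lambda>x. x)" by (simp add: fun_eq_iff sig_def)
  then show ?thesis by (simp add: bij_betw_def)
qed

lemma flip_rep:
  assumes "a \<in> X" "b \<in> X" "finite X"
  shows "is_rep X (scal (flip a b j))"
  by (rule scal_rep[where \<sigma>="sig a b j"]) (use assms flip_nil flip_snoc sig_bij in auto)

lemma flip_key:
  assumes "a \<noteq> b"
  shows "flip a b j (replicate (Suc i) a) = replicate i a @ [b] \<longleftrightarrow> i = j"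
proof (cases "j \<le> i")
  case True
  have t: "take j (replicate (Suc i) a) = replicate j a"
    using True by (simp only: take_replicate) (simp add: min_def)
  show ?thesis
  proof
    assume h: "flip a b j (replicate (Suc i) a) = replicate i a @ [b]"
    show "i = j"
    proof (rule ccontr)
      assume "i \<noteq> j"
      then have "j < i" using True by simp
      have "flip a b j (replicate (Suc i) a) = (replicate (Suc i) a)[j := tau a b a]"
        using \<open>j < i\<close> t by (simp add: flip_def del: replicate_Suc)
      then have "flip a b j (replicate (Suc i) a) ! i = a"
        using \<open>j < i\<close> by (simp add: nth_list_update_neq del: replicate_Suc)
      moreover have "(replicate i a @ [b]) ! i = b" by (simp add: nth_append)
      ultimately show False using h assms by simp
    qed
  next
    assume "i = j"
    then show "flip a b j (replicate (Suc i) a) = replicate i a @ [b]"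
      using t by (simp add: flip_def tau_def replicate_append_same[symmetric] list_update_append nth_append)
  qed
next
  case False
  then have "flip a b j (replicate (Suc i) a) = replicate (Suc i) a" by (simp add: flip_def)
  moreover have "replicate (Suc i) a \<noteq> replicate i a @ [b]"
  proof
    assume "replicate (Suc i) a = replicate i a @ [b]"
    then have "replicate (Suc i) a ! i = (replicate i a @ [b]) ! i" by simp
    then show False using assms by (simp add: nth_append del: replicate_Suc)
  qed
  ultimately show ?thesis using False by auto
qed



lemma inf_dim:
  assumes fin: "finite X" and aX: "a \<in> X" and bX: "b \<in> X" and ab: "a \<noteq> b"
  shows "AX_infinite_dimensional X"
  unfolding AX_infinite_dimensional_def
proof
  fix n :: nat
  define gen where "gen i = (replicate (Suc i) a, replicate i a @ [b])" for i
  define p where "p i m = (if m = [gen i] then 1 else (0::complex))" for i m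
  have gen_inj: "gen i = gen i' \<longleftrightarrow> i = i'" for i i'
    by (auto simp: gen_def dest: arg_cong[where f=length])
  have gen_gen: "is_gen X (gen i)" for i using aX bX by (auto simp: gen_def is_gen_def)
  have pp: "is_poly X (p i)" for i
  proof -
    have "{m. p i m \<noteq> 0} = {[gen i]}" by (auto simp: p_def)
    then show ?thesis unfolding is_poly_def using gen_gen by (auto simp: p_def)
  qed
  show "\<exists>p. (\<forall>i<n. is_poly X (p i)) \<and>
        (\<forall>c :: nat \<Rightarrow> complex. univ_norm X (\<lambda>m. \<Sum>i<n. c i * p i m) = 0 \<longrightarrow> (\<forall>i<n. c i = 0))"
  proof (intro exI[of _ p] conjI)
    show "\<forall>i<n. is_poly X (p i)" using pp by auto
  next
    show "\<forall>c :: nat \<Rightarrow> complex. univ_norm X (\<lambda>m. \<Sum>i<n. c i * p i m) = 0 \<longrightarrow> (\<forall>i<n. c i = 0)"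
    proof (intro allI impI)
    fix c :: "nat \<Rightarrow> complex" and j
    assume z: "univ_norm X (\<lambda>m. \<Sum>i<n. c i * p i m) = 0" and jn: "j < n"
    define q where "q m = (\<Sum>i<n. c i * p i m)" for m
    show "c j = 0"
    proof (rule ccontr)
      assume cj: "c j \<noteq> 0"
      define A where "A = (\<lambda>i. [gen i]) ` {..<n}"
      have finA: "finite A" unfolding A_def by simp
      have injA: "inj_on (\<lambda>i. [gen i]) {..<n}" using gen_inj by (auto simp: inj_on_def)
      have qsub: "{m. q m \<noteq> 0} \<subseteq> A"
      proof
        fix m assume "m \<in> {m. q m \<noteq> 0}"
        then obtain i where "i < n" "p i m \<noteq> 0" unfolding q_def
          by (metis (mono_tags, lifting) lessThan_iff mem_Collect_eq mult_zero_right sum.neutral)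
        then show "m \<in> A" unfolding A_def p_def by (auto split: if_splits)
      qed
      have qpoly: "is_poly X q" unfolding is_poly_def
      proof
        show "finite {m. q m \<noteq> 0}" using finite_subset[OF qsub finA] .
        show "\<forall>m. q m \<noteq> 0 \<longrightarrow> (\<forall>g\<in>set m. is_gen X g)"
          using qsub gen_gen unfolding A_def by auto
      qed
      have qv: "q [gen i'] = c i'" if "i' < n" for i'
      proof -
        have "q [gen i'] = (\<Sum>i<n. if i = i' then c i else 0)"
          unfolding q_def p_def by (intro sum.cong) (auto simp: gen_inj)
        also have "\<dots> = c i'" using that by simp
        finally show ?thesis .
      qed
      define P where "P = scal (flip a b j)"
      have rep: "is_rep X P" unfolding P_def using flip_rep[OF aX bX fin] .
      have me: "P (gen i) e0 k = (if i = j then e0 k else 0)" for i k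
        using flip_key[OF ab, of j i] by (auto simp: P_def scal_def gen_def)
      have pe: "poly_eval P q e0 k = c j * e0 k" for k
      proof -
        have "poly_eval P q e0 k = (\<Sum>m\<in>A. q m * mono_eval P m e0 k)"
          by (rule poly_eval_superset[OF finA qsub])
        also have "\<dots> = (\<Sum>i<n. q [gen i] * mono_eval P [gen i] e0 k)"
          unfolding A_def by (rule sum.reindex[OF injA, unfolded comp_def])
        also have "\<dots> = (\<Sum>i<n. if i = j then c j * e0 k else 0)"
          by (intro sum.cong) (auto simp: qv me)
        also have "\<dots> = c j * e0 k" using jn by simp
        finally show ?thesis .
      qed
      have inl2: "poly_eval P q e0 \<in> l2" using poly_bound[OF qpoly rep e0_l2] e0_norm by simp
      have "0 < l2_norm (poly_eval P q e0)"
        by (rule l2_norm_pos[OF inl2, of 0]) (simp add: pe e0_def cj)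
      also have "\<dots> \<le> univ_norm X q"
        using univ_norm_ge[OF qpoly rep e0_l2] e0_norm by simp
      finally show False using z unfolding q_def by simp
    qed
    qed
  qed
qed



definition Pc :: "'x \<Rightarrow> 'x \<Rightarrow> op" where
  "Pc a c = (if c = a then op_of 1 0 0 0 False else op_of (1/2) (1/2) (1/2) (1/2) False)"
definition Qc :: "'x \<Rightarrow> 'x \<Rightarrow> op" where
  "Qc a c = (if c = a then op_of 0 0 0 1 True else op_of (1/2) (-1/2) (-1/2) (1/2) True)"

lemma Pc_proj: "is_projection (Pc a c)"
  unfolding Pc_def by (auto intro!: op_of_proj)
lemma Qc_proj: "is_projection (Qc a c)"
  unfolding Qc_def by (auto intro!: op_of_proj)
lemma PQ_sum: "Pc a c f k + Qc a c f k = f k"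
  by (auto simp: Pc_def Qc_def op_of_def algebra_simps)

definition R :: "'x \<Rightarrow> 'x \<Rightarrow> 'x \<Rightarrow> 'x \<Rightarrow> 'x \<Rightarrow> op" where
  "R a b c s t f k = (if t = s then Pc a c f k else 0) + (if t = tau a b s then Qc a c f k else 0)"

lemma R_proj: "is_projection (R a b c s t)"
proof -
  consider "t = s" "t = tau a b s" | "t = s" "t \<noteq> tau a b s" | "t \<noteq> s" "t = tau a b s"
    | "t \<noteq> s" "t \<noteq> tau a b s" by blast
  then show ?thesis
  proof cases
    case 1
    then have "R a b c s t = (\<lambda>f. f)" by (auto simp: fun_eq_iff R_def PQ_sum)
    then show ?thesis by (simp add: id_proj)
  next
    case 2
    then have "R a b c s t = Pc a c" by (auto simp: fun_eq_iff R_def)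
    then show ?thesis by (simp add: Pc_proj)
  next
    case 3
    then have "R a b c s t = Qc a c" by (auto simp: fun_eq_iff R_def)
    then show ?thesis by (simp add: Qc_proj)
  next
    case 4
    then have "R a b c s t = (\<lambda>f n. 0)" by (auto simp: fun_eq_iff R_def)
    then show ?thesis by (simp add: zero_proj)
  qed
qed

lemma tau_mem: "a \<in> X \<Longrightarrow> b \<in> X \<Longrightarrow> x \<in> X \<Longrightarrow> tau a b x \<in> X"
  by (auto simp: tau_def)

lemma R_row:
  assumes "finite X" "a \<in> X" "b \<in> X" "s \<in> X"
  shows "(\<Sum>y\<in>X. R a b c s y f k) = f k"
proof -
  have "(\<Sum>y\<in>X. R a b c s y f k) = (\<Sum>y\<in>X. if y = s then Pc a c f k else 0) + (\<Sum>y\<in>X. if y = tau a b s then Qc a c f k else 0)"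
    unfolding R_def by (simp add: sum.distrib)
  also have "\<dots> = Pc a c f k + Qc a c f k" using assms tau_mem[of a X b s] by simp
  finally show ?thesis by (simp add: PQ_sum)
qed

lemma R_col:
  assumes "finite X" "a \<in> X" "b \<in> X" "t \<in> X"
  shows "(\<Sum>z\<in>X. R a b c z t f k) = f k"
proof -
  have e: "(t = tau a b z) = (z = tau a b t)" for z using tau_inv[of a b] by metis
  have "(\<Sum>z\<in>X. R a b c z t f k) = (\<Sum>z\<in>X. if z = t then Pc a c f k else 0) + (\<Sum>z\<in>X. if z = tau a b t then Qc a c f k else 0)"
    unfolding R_def e by (simp add: sum.distrib eq_commute[of t])
  also have "\<dots> = Pc a c f k + Qc a c f k" using assms tau_mem[of a X b t] by simp
  finally show ?thesis by (simp add: PQ_sum)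
qed

fun ncr :: "'x \<Rightarrow> 'x \<Rightarrow> 'x gen \<Rightarrow> op" where
  "ncr a b (c # s # u, d # t # v) = (if c = d \<and> u = v then R a b c s t else (\<lambda>f n. 0))"
| "ncr a b ([c], [d]) = (if c = d then (\<lambda>f. f) else (\<lambda>f n. 0))"
| "ncr a b _ = (\<lambda>f. f)"

lemma ncr_proj: "is_projection (ncr a b g)"
  by (induction a b g rule: ncr.induct) (auto simp: R_proj id_proj zero_proj)

lemma ncr_rep:
  assumes fin: "finite X" and aX: "a \<in> X" and bX: "b \<in> X"
  shows "is_rep X (ncr a b)"
  unfolding is_rep_def
proof (intro conjI allI impI ballI)
  fix g :: "'a gen" show "is_projection (ncr a b g)" by (rule ncr_proj)
next
  fix f :: "nat \<Rightarrow> complex" show "ncr a b ([], []) f = f" by simp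
next
  fix u v :: "'a list" and x f
  assume h: "is_gen X (u, v) \<and> x \<in> X"
  then have len: "length u = length v" and uX: "set u \<subseteq> X" and vX: "set v \<subseteq> X" and xX: "x \<in> X"
    by (auto simp: is_gen_def)
  have "ncr a b (u, v) f k = (\<Sum>y\<in>X. ncr a b (u @ [x], v @ [y]) f k) \<and>
        ncr a b (u, v) f k = (\<Sum>z\<in>X. ncr a b (u @ [z], v @ [x]) f k)" for k
  proof (cases u)
    case Nil
    then have "v = []" using len by simp
    then show ?thesis using Nil fin xX by (simp add: eq_commute[of x] if_distrib[of "\<lambda>F. F f k"])
  next
    case (Cons c u1)
    then obtain d v1 where v: "v = d # v1" using len by (cases v) auto
    show ?thesis
    proof (cases u1)
      case Nil
      then have "v1 = []" using len Cons v by simp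
      then show ?thesis using Nil Cons v R_row[OF fin aX bX xX] R_col[OF fin aX bX xX] by simp
    next
      case (Cons s u2)
      then obtain t v2 where v1: "v1 = t # v2" using len \<open>u = c # u1\<close> v by (cases v1) auto
      have e: "(u2 @ [x] = v2 @ [y]) = (u2 = v2 \<and> x = y)" for y by auto
      have e2: "(u2 @ [z] = v2 @ [x]) = (u2 = v2 \<and> z = x)" for z by auto
      show ?thesis using Cons \<open>u = c # u1\<close> v v1 fin xX
        by (cases "c = d \<and> u2 = v2") (simp_all add: e e2 if_distrib[of "\<lambda>F. F f k"] conj_commute, auto)
    qed
  qed
  then show "ncr a b (u, v) f = (\<lambda>k. \<Sum>y\<in>X. ncr a b (u @ [x], v @ [y]) f k)"
    and "ncr a b (u, v) f = (\<lambda>k. \<Sum>z\<in>X. ncr a b (u @ [z], v @ [x]) f k)" by auto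
qed



lemma split_finite: "finite {(m1, m2). m1 @ m2 = (m :: 'a list)}"
proof (rule finite_subset)
  show "{(m1, m2). m1 @ m2 = m} \<subseteq> (\<lambda>i. (take i m, drop i m)) ` {..length m}"
  proof
    fix z assume "z \<in> {(m1, m2). m1 @ m2 = m}"
    then obtain m1 m2 where z: "z = (m1, m2)" "m1 @ m2 = m" by auto
    then show "z \<in> (\<lambda>i. (take i m, drop i m)) ` {..length m}"
      by (intro image_eqI[of _ _ "length m1"]) auto
  qed
qed simp

lemma poly_mult_mono:
  "poly_mult (\<lambda>m. if m = [g1] then 1 else 0) (\<lambda>m. if m = [g2] then 1 else 0) =
     (\<lambda>m. if m = [g1, g2] then 1 else 0)"
proof
  fix m :: "'a gen list"
  have "poly_mult (\<lambda>m. if m = [g1] then 1 else 0) (\<lambda>m. if m = [g2] then 1 else 0) m =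
    (\<Sum>z\<in>{(m1, m2). m1 @ m2 = m}. if z = ([g1], [g2]) then 1 else 0)"
    unfolding poly_mult_def by (intro sum.cong) (auto split: if_splits)
  also have "\<dots> = (if m = [g1, g2] then 1 else 0)"
    using split_finite[of m] by (auto simp: sum.delta[OF split_finite])
  finally show "poly_mult (\<lambda>m. if m = [g1] then 1 else 0) (\<lambda>m. if m = [g2] then 1 else 0) m =
     (if m = [g1, g2] then 1 else 0)" .
qed



lemma noncomm:
  assumes fin: "finite X" and aX: "a \<in> X" and bX: "b \<in> X" and ab: "a \<noteq> b"
  shows "AX_noncommutative X"
  unfolding AX_noncommutative_def
proof -
  define g1 where "g1 = ([a, a], [a, a])"
  define g2 where "g2 = ([b, b], [b, b])"
  have g12: "g1 \<noteq> g2" using ab by (simp add: g1_def g2_def)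
  define p where "p = (\<lambda>m. if m = [g1] then 1 else (0::complex))"
  define q where "q = (\<lambda>m. if m = [g2] then 1 else (0::complex))"
  have gg: "is_gen X g1" "is_gen X g2" using aX bX by (auto simp: g1_def g2_def is_gen_def)
  have pp: "is_poly X p" "is_poly X q"
  proof -
    have "{m. p m \<noteq> 0} = {[g1]}" "{m. q m \<noteq> 0} = {[g2]}" by (auto simp: p_def q_def)
    then show "is_poly X p" "is_poly X q" unfolding is_poly_def using gg by (auto simp: p_def q_def)
  qed
  define d where "d = (\<lambda>m. poly_mult p q m - poly_mult q p m)"
  have dd: "d = (\<lambda>m. (if m = [g1, g2] then 1 else 0) - (if m = [g2, g1] then 1 else 0))"
    unfolding d_def p_def q_def poly_mult_mono ..
  have dsub: "{m. d m \<noteq> 0} \<subseteq> {[g1, g2], [g2, g1]}"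
    by (rule subsetI, unfold dd mem_Collect_eq, rule ccontr) simp
  have dpoly: "is_poly X d" unfolding is_poly_def
  proof (intro conjI allI impI)
    show "finite {m. d m \<noteq> 0}" by (rule finite_subset[OF dsub]) simp
    fix m assume "d m \<noteq> 0"
    then have "m \<in> {[g1, g2], [g2, g1]}" using dsub by blast
    then show "\<forall>g\<in>set m. is_gen X g" using gg by auto
  qed
  define P where "P = ncr a b"
  have rep: "is_rep X P" unfolding P_def by (rule ncr_rep[OF fin aX bX])
  have P1: "P g1 = op_of 1 0 0 0 False"
    unfolding P_def g1_def by (simp only: ncr.simps) (simp add: R_def Pc_def tau_def fun_eq_iff ab)
  have P2: "P g2 = op_of (1/2) (1/2) (1/2) (1/2) False"
    unfolding P_def g2_def by (simp only: ncr.simps) (simp add: R_def Pc_def tau_def fun_eq_iff ab ab[symmetric])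
  have pe: "poly_eval P d e0 k = P g1 (P g2 e0) k - P g2 (P g1 e0) k" for k
  proof -
    have "poly_eval P d e0 k = (\<Sum>m\<in>{[g1, g2], [g2, g1]}. d m * mono_eval P m e0 k)"
      by (rule poly_eval_superset[OF _ dsub]) simp
    also have "\<dots> = d [g1, g2] * mono_eval P [g1, g2] e0 k + d [g2, g1] * mono_eval P [g2, g1] e0 k"
      using g12 by simp
    also have "d [g1, g2] = 1" using g12 by (simp add: dd)
    also have "d [g2, g1] = -1" using g12 by (simp add: dd)
    finally show ?thesis by simp
  qed
  have inl2: "poly_eval P d e0 \<in> l2" using poly_bound[OF dpoly rep e0_l2] e0_norm by simp
  have "0 < l2_norm (poly_eval P d e0)"
    by (rule l2_norm_pos[OF inl2, of 1]) (simp add: pe P1 P2 op_of_def e0_def)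
  also have "\<dots> \<le> univ_norm X d"
    using univ_norm_ge[OF dpoly rep e0_l2] e0_norm by simp
  finally show "\<exists>p q. is_poly X p \<and> is_poly X q \<and> univ_norm X (\<lambda>m. poly_mult p q m - poly_mult q p m) \<noteq> 0"
    using pp unfolding d_def by (intro exI[of _ p] exI[of _ q]) auto
qed

theorem proposition3p7:
  fixes X :: "'x set"
  assumes "finite X" and "card X \<ge> 2"
  shows "AX_noncommutative X \<and> AX_infinite_dimensional X"
proof -
  obtain a b where ab: "a \<in> X" "b \<in> X" "a \<noteq> b"
  proof -
    have "\<not> (\<forall>a\<in>X. \<forall>b\<in>X. a = b)"
    proof
      assume h: "\<forall>a\<in>X. \<forall>b\<in>X. a = b"
      then have "card X \<le> 1" using card_le_Suc0_iff_eq[OF assms(1)] by auto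
      then show False using assms(2) by simp
    qed
    then show ?thesis using that by blast
  qed
  show ?thesis using noncomm[OF assms(1) ab] inf_dim[OF assms(1) ab] by simp
qed

end
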